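(* Let $g_2,g_3\in\mathbb{R}$ with $\Delta=g_2^3-27g_3^2>0$, and let $w$ (real, $w>0$) and $w'$ (purely imaginary, $\mathrm{Im}\,w'>0$) be the fundamental half-periods of the associated Weierstrass functions. Define \[ \widetilde{\Psi}_x(k)=\frac{\sigma(x+k+w')}{\sigma(x+w')\sigma(k)}e^{-\zeta(k)x-\zeta(w')k},\qquad \widetilde{\Psi}_x(k,l)=\frac{\sigma(x+k+l+w')}{\sigma(x+w')\sigma(k+l)}e^{-(\zeta(k)+\zeta(l))x-\zeta(w')(k+l)}. \] Then $\widetilde{\Psi}_x(k)$ and $\widetilde{\Psi}_x(k,l)$ are real-valued (wherever defined) when $x,k,l\in\mathbb{R}$.
   Context: $\sigma,\zeta,\wp$ are the Weierstrass sigma, zeta and elliptic functions with invariants $g_2,g_3$, i.e. $(\wp')^2=4\wp^3-g_2\wp-g_3$, $\zeta=\sigma'/\sigma$, $\wp=-\zeta'$, with period lattice generated by $2w,2w'$. *)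

theory Defs
  imports "HOL-Analysis.Analysis"
begin

definition lattice :: "complex \<Rightarrow> complex \<Rightarrow> complex set" where
  "lattice w w' = {2 * of_int m * w + 2 * of_int n * w' | m n. True}"

text \<open>Weierstrass sigma function of the lattice generated by 2w, 2w', defined by its
  Weierstrass product, taken as the limit over the squares |m|,|n| <= N
  (the product converges absolutely, so this is the usual sigma function).\<close>
definition wsigma :: "complex \<Rightarrow> complex \<Rightarrow> complex \<Rightarrow> complex" where
  "wsigma w w' z = lim (\<lambda>N::nat. z *
     (\<Prod>\<omega> \<in> {2 * of_int m * w + 2 * of_int n * w' | m n. \<bar>m\<bar> \<le> int N \<and> \<bar>n\<bar> \<le> int N} - {0}.
        (1 - z / \<omega>) * exp (z / \<omega> + z\<^sup>2 / (2 * \<omega>\<^sup>2))))"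

definition wzeta :: "complex \<Rightarrow> complex \<Rightarrow> complex \<Rightarrow> complex" where
  "wzeta w w' z = deriv (wsigma w w') z / wsigma w w' z"

definition wp :: "complex \<Rightarrow> complex \<Rightarrow> complex \<Rightarrow> complex" where
  "wp w w' z = - deriv (wzeta w w') z"

definition Psi1 :: "complex \<Rightarrow> complex \<Rightarrow> complex \<Rightarrow> complex \<Rightarrow> complex" where
  "Psi1 w w' x k =
     wsigma w w' (x + k + w') / (wsigma w w' (x + w') * wsigma w w' k)
     * exp (- wzeta w w' k * x - wzeta w w' w' * k)"

definition Psi2 :: "complex \<Rightarrow> complex \<Rightarrow> complex \<Rightarrow> complex \<Rightarrow> complex \<Rightarrow> complex" where
  "Psi2 w w' x k l =
     wsigma w w' (x + k + l + w') / (wsigma w w' (x + w') * wsigma w w' (k + l))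
     * exp (- (wzeta w w' k + wzeta w w' l) * x - wzeta w w' w' * (k + l))"

end

theory Submission
  imports Defs "HOL-Complex_Analysis.Complex_Analysis"
begin

lemma norm_prod_minus1_le_gen:
  fixes f :: "'b \<Rightarrow> 'a :: {real_normed_div_algebra,comm_ring_1}"
  shows "norm (prod (\<lambda>n. 1 + f n) A - 1) \<le> prod (\<lambda>n. 1 + norm (f n)) A - 1"
proof (induction A rule: infinite_finite_induct)
  case (insert x A)
  from insert.hyps have
    "norm ((\<Prod>n\<in>insert x A. 1 + f n) - 1) =
       norm ((\<Prod>n\<in>A. 1 + f n) - 1 + f x * (\<Prod>n\<in>A. 1 + f n))"
    by (simp add: algebra_simps)
  also have "\<dots> \<le> norm ((\<Prod>n\<in>A. 1 + f n) - 1) + norm (f x * (\<Prod>n\<in>A. 1 + f n))"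
    by (rule norm_triangle_ineq)
  also have "norm (f x * (\<Prod>n\<in>A. 1 + f n)) = norm (f x) * (\<Prod>n\<in>A. norm (1 + f n))"
    by (simp add: prod_norm norm_mult)
  also have "(\<Prod>n\<in>A. norm (1 + f n)) \<le> (\<Prod>n\<in>A. 1 + norm (f n))"
    by (intro prod_mono) (auto intro: norm_triangle_ineq order.trans[OF norm_triangle_ineq])
  hence "norm (f x) * (\<Prod>n\<in>A. norm (1 + f n)) \<le> norm (f x) * (\<Prod>n\<in>A. 1 + norm (f n))"
    by (intro mult_left_mono) auto
  also have "norm ((\<Prod>n\<in>A. 1 + f n) - 1) \<le> (\<Prod>n\<in>A. 1 + norm (f n)) - 1"
    by (rule insert.IH)
  also have "(\<Prod>n\<in>A. 1 + norm (f n)) - 1 + norm (f x) * (\<Prod>n\<in>A. 1 + norm (f n)) =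
               (\<Prod>n\<in>insert x A. 1 + norm (f n)) - 1"
    using insert.hyps by (simp add: algebra_simps)
  finally show ?case by - simp_all
qed simp_all

lemma norm_prod_minus1_exp:
  fixes f :: "'b \<Rightarrow> complex"
  shows "norm (prod f A - 1) \<le> exp (\<Sum>n\<in>A. norm (f n - 1)) - 1"
proof -
  have "norm (prod f A - 1) = norm (prod (\<lambda>n. 1 + (f n - 1)) A - 1)" by simp
  also have "\<dots> \<le> prod (\<lambda>n. 1 + norm (f n - 1)) A - 1" by (rule norm_prod_minus1_le_gen)
  also have "prod (\<lambda>n. 1 + norm (f n - 1)) A \<le> exp (\<Sum>n\<in>A. norm (f n - 1))"
    by (rule prod_le_exp_sum) auto
  finally show ?thesis by simp
qed

lemma norm_prod_exp:
  fixes f :: "'b \<Rightarrow> complex"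
  shows "norm (prod f A) \<le> exp (\<Sum>n\<in>A. norm (f n - 1))"
proof -
  have "norm (prod f A) \<le> norm (prod f A - 1) + 1"
    using norm_triangle_ineq[of "prod f A - 1" 1] by simp
  thus ?thesis using norm_prod_minus1_exp[of f A] by simp
qed

locale rect =
  fixes w :: real and w' :: complex
  assumes wpos: "w > 0" and re0: "Re w' = 0" and impos: "Im w' > 0"
begin

definition b where "b = Im w'"
definition c where "c = min w b"

lemma bpos: "b > 0" and cpos: "c > 0" and c_le_w: "c \<le> w" and c_le_b: "c \<le> b"
  using wpos impos by (auto simp: b_def c_def)

lemma w'_eq: "w' = \<i> * of_real b"
  by (simp add: complex_eq_iff re0 b_def)

definition om :: "int \<times> int \<Rightarrow> complex" where
  "om i = 2 * of_int (fst i) * of_real w + 2 * of_int (snd i) * w'"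

definition mx :: "int \<times> int \<Rightarrow> int" where
  "mx i = max \<bar>fst i\<bar> \<bar>snd i\<bar>"

lemma Re_om: "Re (om i) = 2 * of_int (fst i) * w"
  by (simp add: om_def re0)
lemma Im_om: "Im (om i) = 2 * of_int (snd i) * b"
  by (simp add: om_def b_def)

lemma om_inj: "om i = om j \<Longrightarrow> i = j"
  using wpos bpos by (auto simp: complex_eq_iff Re_om Im_om prod_eq_iff)

lemma inj_om: "inj_on om A"
  by (auto intro: inj_onI om_inj)

lemma om_0: "om (0,0) = 0" by (simp add: om_def)

lemma om_eq0: "om i = 0 \<longleftrightarrow> i = (0,0)"
  using om_inj[of i "(0,0)"] by (auto simp: om_0)

lemma norm_om_ge: "norm (om i) \<ge> 2 * c * mx i"
proof -
  have "2 * c * \<bar>fst i\<bar> \<le> 2 * w * \<bar>fst i\<bar>"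
    using c_le_w cpos by (intro mult_right_mono) auto
  also have "\<dots> = \<bar>Re (om i)\<bar>" using wpos by (simp add: Re_om abs_mult)
  also have "\<dots> \<le> norm (om i)" by (rule abs_Re_le_cmod)
  finally have 1: "2 * c * \<bar>fst i\<bar> \<le> norm (om i)" .
  have "2 * c * \<bar>snd i\<bar> \<le> 2 * b * \<bar>snd i\<bar>"
    using c_le_b cpos by (intro mult_right_mono) auto
  also have "\<dots> = \<bar>Im (om i)\<bar>" using bpos by (simp add: Im_om abs_mult)
  also have "\<dots> \<le> norm (om i)" by (rule abs_Im_le_cmod)
  finally have 2: "2 * c * \<bar>snd i\<bar> \<le> norm (om i)" .
  show ?thesis using 1 2 by (simp add: mx_def max_def)
qed

definition Sq :: "nat \<Rightarrow> (int \<times> int) set" where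
  "Sq N = {- int N..int N} \<times> {- int N..int N}"

definition L :: "nat \<Rightarrow> (int \<times> int) set" where
  "L N = Sq N - {(0,0)}"

lemma finite_Sq [simp]: "finite (Sq N)" and finite_L [simp]: "finite (L N)"
  by (auto simp: Sq_def L_def)

lemma in_Sq: "i \<in> Sq N \<longleftrightarrow> mx i \<le> int N"
  by (cases i) (auto simp: Sq_def mx_def)

lemma Sq_mono: "M \<le> N \<Longrightarrow> Sq M \<subseteq> Sq N"
  by (auto simp: in_Sq)

lemma zero_in_Sq [simp]: "(0,0) \<in> Sq N"
  by (simp add: in_Sq mx_def)

lemma card_Sq: "card (Sq N) = (2 * N + 1)^2"
proof -
  have "card {- int N..int N} = 2 * N + 1"
    by (simp add: card_atLeastAtMost_int) 
  thus ?thesis by (simp add: Sq_def card_cartesian_product power2_eq_square)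
qed

lemma lattice_eq: "lattice (of_real w) w' = range om"
proof (auto simp: lattice_def om_def)
  fix m n :: int
  show "2 * of_int m * of_real w + 2 * of_int n * w' \<in> range (\<lambda>x. 2 * of_int (fst x) * complex_of_real w + 2 * of_int (snd x) * w')"
    by (rule range_eqI[of _ _ "(m,n)"]) simp
qed

lemma set_eq: "{2 * of_int m * of_real w + 2 * of_int n * w' | m n. \<bar>m\<bar> \<le> int N \<and> \<bar>n\<bar> \<le> int N} - {0}
   = om ` L N"
proof -
  have "{2 * of_int m * of_real w + 2 * of_int n * w' | m n. \<bar>m\<bar> \<le> int N \<and> \<bar>n\<bar> \<le> int N} = om ` Sq N"
    by (force simp: om_def Sq_def)
  moreover have "om ` L N = om ` Sq N - {0}"
    by (auto simp: L_def om_eq0)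
  ultimately show ?thesis by simp
qed

lemma mx_nonneg: "mx i \<ge> 0" by (simp add: mx_def)

lemma shell_sum:
  assumes "K \<ge> 1"
  shows "(\<Sum>i\<in>Sq (Suc K) - Sq K. 1 / real_of_int (mx i) ^ 3) \<le> 8 / real K - 8 / real (Suc K)"
proof -
  have sub: "Sq K \<subseteq> Sq (Suc K)" by (rule Sq_mono) auto
  have "card (Sq (Suc K) - Sq K) = (2 * Suc K + 1)^2 - (2 * K + 1)^2"
    using sub by (simp add: card_Diff_subset card_Sq)
  also have "\<dots> = 8 * (K + 1)" by (simp add: power2_eq_square algebra_simps)
  finally have card: "card (Sq (Suc K) - Sq K) = 8 * (K + 1)" .
  have mxe: "mx i = int K + 1" if "i \<in> Sq (Suc K) - Sq K" for i
    using that by (auto simp: in_Sq)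
  have "(\<Sum>i\<in>Sq (Suc K) - Sq K. 1 / real_of_int (mx i) ^ 3) =
        (\<Sum>i\<in>Sq (Suc K) - Sq K. 1 / (real K + 1) ^ 3)"
    by (intro sum.cong) (auto simp: mxe)
  also have "\<dots> = 8 * (real K + 1) / (real K + 1) ^ 3"
    by (simp add: card)
  also have "\<dots> = 8 / ((real K + 1) * (real K + 1))"
  proof -
    have "(real K+1)^3 = (real K+1) * ((real K+1)*(real K+1))" by algebra
    moreover have "real K + 1 \<noteq> 0" by simp
    ultimately show ?thesis by (metis mult.commute nonzero_mult_divide_mult_cancel_left)
  qed
  also have "\<dots> \<le> 8 / (real K * (real K + 1))"
    using assms by (intro divide_left_mono mult_right_mono mult_pos_pos) auto
  also have "\<dots> = 8 / real K - 8 / real (Suc K)"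
    using assms by (simp add: field_simps)
  finally show ?thesis by simp
qed

lemma annulus_sum:
  assumes "N \<ge> 1" "N \<le> K"
  shows "(\<Sum>i\<in>Sq K - Sq N. 1 / real_of_int (mx i) ^ 3) \<le> 8 / N - 8 / K"
  using assms(2)
proof (induction K rule: dec_induct)
  case base
  then show ?case by simp
next
  case (step K)
  have "Sq (Suc K) - Sq N = (Sq K - Sq N) \<union> (Sq (Suc K) - Sq K)"
    using Sq_mono[of N K] Sq_mono[of K "Suc K"] step by auto
  hence "(\<Sum>i\<in>Sq (Suc K) - Sq N. 1 / real_of_int (mx i) ^ 3) =
     (\<Sum>i\<in>Sq K - Sq N. 1 / real_of_int (mx i) ^ 3) + (\<Sum>i\<in>Sq (Suc K) - Sq K. 1 / real_of_int (mx i) ^ 3)"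
    by (simp add: sum.union_disjoint Int_Diff Diff_Int_distrib2 Diff_disjoint
        del: Diff_iff)
  also have "\<dots> \<le> (8 / N - 8 / K) + (8 / real K - 8 / real (Suc K))"
    using step.IH by (intro add_mono shell_sum) (use step.hyps assms(1) in auto)
  finally show ?case by simp
qed

lemma tail_sum:
  assumes "finite A" "A \<inter> Sq N = {}" "N \<ge> 1"
  shows "(\<Sum>i\<in>A. 1 / real_of_int (mx i) ^ 3) \<le> 8 / N"
proof -
  obtain K where K: "K \<ge> N" "A \<subseteq> Sq K"
  proof -
    define K where "K = max N (nat (Max (insert 0 (mx ` A))))"
    have "A \<subseteq> Sq K"
    proof
      fix i assume "i \<in> A"
      hence "mx i \<le> Max (insert 0 (mx ` A))" using assms by (intro Max_ge) auto
      thus "i \<in> Sq K" by (auto simp: in_Sq K_def)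
    qed
    thus ?thesis using that[of K] by (auto simp: K_def)
  qed
  have "(\<Sum>i\<in>A. 1 / real_of_int (mx i) ^ 3) \<le> (\<Sum>i\<in>Sq K - Sq N. 1 / real_of_int (mx i) ^ 3)"
    using assms K by (intro sum_mono2) (auto simp: mx_nonneg)
  also have "\<dots> \<le> 8 / N - 8 / K" using annulus_sum[of N K] assms K by simp
  also have "\<dots> \<le> 8 / N" by simp
  finally show ?thesis .
qed

end

context rect begin

definition E :: "complex \<Rightarrow> complex" where "E u = weierstrass_factor 2 u"

lemma E_eq: "E u = (1 - u) * exp (u + u^2/2)"
  by (simp add: weierstrass_factor_def E_def numeral_2_eq_2)

lemma E_holo [holomorphic_intros]: "f holomorphic_on A \<Longrightarrow> (\<lambda>z. E (f z)) holomorphic_on A"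
  unfolding E_def by (intro holomorphic_intros)

lemma E_eq0: "E u = 0 \<longleftrightarrow> u = 1"
  by (simp add: E_def)

definition P :: "nat \<Rightarrow> complex \<Rightarrow> complex" where
  "P N z = z * (\<Prod>i\<in>L N. E (z / om i))"

definition sig :: "complex \<Rightarrow> complex" where "sig = wsigma (of_real w) w'"

lemma sig_lim_def: "sig z = lim (\<lambda>N. P N z)"
proof -
  have "\<And>N. (\<Prod>\<omega>\<in>om ` L N. (1 - z / \<omega>) * exp (z / \<omega> + z\<^sup>2 / (2 * \<omega>\<^sup>2))) = (\<Prod>i\<in>L N. E (z / om i))"
    by (subst prod.reindex[OF inj_om]) (simp add: E_eq power_divide mult.commute)
  thus ?thesis unfolding sig_def wsigma_def set_eq P_def by simp
qed

lemma P_holo [holomorphic_intros]: "P N holomorphic_on A"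
proof -
  have d: "(\<lambda>z. z / om i) holomorphic_on A" for i
    by (simp add: divide_inverse holomorphic_on_mult holomorphic_on_const holomorphic_on_ident)
  show ?thesis unfolding P_def
    by (intro holomorphic_on_mult holomorphic_on_ident holomorphic_on_prod E_holo d)
qed

lemma E_bound:
  assumes "norm z \<le> R" "R \<le> c * mx i" "R > 0"
  shows "norm (E (z / om i) - 1) \<le> (3 * R^3 / (8 * c^3)) * (1 / real_of_int (mx i) ^ 3)"
proof -
  have mxpos: "real_of_int (mx i) > 0"
    using assms cpos by (smt (verit) mult_nonneg_nonpos of_int_0_le_iff mx_nonneg)
  have "2 * norm z \<le> 2 * c * mx i" using assms by simp
  also have "\<dots> \<le> norm (om i)" by (rule norm_om_ge)
  finally have le: "2 * norm z \<le> norm (om i)" .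
  have ompos: "norm (om i) > 0" using norm_om_ge[of i] cpos mxpos
    by (smt (verit) mult_pos_pos)
  have half: "norm (z / om i) \<le> 1/2" using le ompos by (simp add: norm_divide field_simps)
  have "norm (E (z / om i) - 1) \<le> 3 * norm (z / om i) ^ Suc 2"
    unfolding E_def by (rule weierstrass_factor_bound[OF half])
  also have "\<dots> = 3 * norm z ^ 3 / norm (om i) ^ 3"
    by (simp add: norm_divide power_divide)
  also have "\<dots> \<le> 3 * R ^ 3 / (2 * c * mx i) ^ 3"
    using assms cpos mxpos norm_om_ge[of i]
    by (intro frac_le mult_left_mono power_mono mult_pos_pos) auto
  also have "\<dots> = (3 * R^3 / (8 * c^3)) * (1 / real_of_int (mx i) ^ 3)"
    by (simp add: power_mult_distrib field_simps)
  finally show ?thesis .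
qed

lemma tail_E_sum:
  assumes "finite A" "A \<inter> Sq N = {}" "N \<ge> 1" "R > 0" "R \<le> c * N" "norm z \<le> R"
  shows "(\<Sum>i\<in>A. norm (E (z / om i) - 1)) \<le> 3 * R^3 / (c^3 * N)"
proof -
  have "(\<Sum>i\<in>A. norm (E (z / om i) - 1)) \<le> (\<Sum>i\<in>A. (3 * R^3 / (8 * c^3)) * (1 / real_of_int (mx i) ^ 3))"
  proof (intro sum_mono E_bound assms)
    fix i assume "i \<in> A"
    hence "mx i > N" using assms(2) by (auto simp: in_Sq)
    hence "real N \<le> real_of_int (mx i)" by linarith
    thus "R \<le> c * real_of_int (mx i)" using assms cpos
      by (smt (verit) mult_left_mono)
  qed
  also have "\<dots> = (3 * R^3 / (8 * c^3)) * (\<Sum>i\<in>A. 1 / real_of_int (mx i) ^ 3)"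
    by (simp add: sum_distrib_left)
  also have "\<dots> \<le> (3 * R^3 / (8 * c^3)) * (8 / N)"
    using assms cpos by (intro mult_left_mono tail_sum) auto
  also have "\<dots> = 3 * R^3 / (c^3 * N)" by simp
  finally show ?thesis .
qed

lemma exp_small: "0 \<le> (t::real) \<Longrightarrow> t \<le> 1/2 \<Longrightarrow> exp t - 1 \<le> 3/2 * t"
  using norm_exp_bounds(2)[of t] by simp

lemma P_ulim:
  assumes "R > 0"
  shows "\<exists>M Q. uniform_limit (cball 0 R) P (\<lambda>z. P M z * Q z) sequentially \<and> (\<forall>z\<in>cball 0 R. Q z \<noteq> 0)"
proof -
  define \<delta> where "\<delta> = (\<lambda>N::nat. 3 * R^3 / (c^3 * N))"
  obtain M :: nat where M: "M \<ge> 1" "real M \<ge> R / c" "real M \<ge> 6 * R^3 / c^3"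
  proof -
    obtain M1 :: nat where "real M1 \<ge> R / c" using real_arch_simple by blast
    moreover obtain M2 :: nat where "real M2 \<ge> 6 * R^3 / c^3" using real_arch_simple by blast
    ultimately show ?thesis by (intro that[of "max 1 (max M1 M2)"]) auto
  qed
  have RcM: "R \<le> c * real N" if "N \<ge> M" for N
  proof -
    have "R / c \<le> real N" using M that by linarith
    thus ?thesis using cpos by (simp add: field_simps)
  qed
  have \<delta>_mono: "\<delta> N \<le> \<delta> M" if "N \<ge> M" for N
    unfolding \<delta>_def using that M assms cpos
    by (intro divide_left_mono mult_left_mono) auto
  have \<delta>_nonneg: "\<delta> N \<ge> 0" for N unfolding \<delta>_def using assms cpos by auto
  have \<delta>M: "\<delta> M \<le> 1/2"
  proof -
    have "6 * R^3 / c^3 \<le> real M" by (rule M)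
    hence "6 * R^3 \<le> real M * c^3" using cpos by (simp add: field_simps)
    thus ?thesis unfolding \<delta>_def using cpos M by (simp add: field_simps)
  qed
  have tail: "(\<Sum>i\<in>A. norm (E (z / om i) - 1)) \<le> \<delta> N"
    if "finite A" "A \<inter> Sq N = {}" "N \<ge> M" "z \<in> cball 0 R" for A N z
    unfolding \<delta>_def using that M assms RcM[of N] by (intro tail_E_sum) auto
  define Qs where "Qs = (\<lambda>N z. \<Prod>i\<in>Sq N - Sq M. E (z / om i))"
  have Qs1: "norm (Qs N z - 1) \<le> 3/4" if "z \<in> cball 0 R" for N z
  proof -
    have "norm (Qs N z - 1) \<le> exp (\<Sum>i\<in>Sq N - Sq M. norm (E (z / om i) - 1)) - 1"
      unfolding Qs_def by (rule norm_prod_minus1_exp)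
    also have "\<dots> \<le> exp (\<delta> M) - 1" using tail[of "Sq N - Sq M" M z] that by auto
    also have "\<dots> \<le> 3/2 * \<delta> M" using \<delta>M \<delta>_nonneg by (intro exp_small) auto
    also have "\<dots> \<le> 3/4" using \<delta>M by simp
    finally show ?thesis .
  qed
  have Qs2: "norm (Qs N z) \<le> 7/4" if "z \<in> cball 0 R" for N z
    using Qs1[OF that, of N] norm_triangle_ineq[of "Qs N z - 1" 1] by simp
  have cauchy: "norm (Qs n z - Qs m z) \<le> 3 * \<delta> m" if "z \<in> cball 0 R" "M \<le> m" "m \<le> n" for m n z
  proof -
    have split: "Sq n - Sq M = (Sq m - Sq M) \<union> (Sq n - Sq m)"
      using Sq_mono[of M m] Sq_mono[of m n] that by auto
    have "Qs n z = Qs m z * (\<Prod>i\<in>Sq n - Sq m. E (z / om i))"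
      unfolding Qs_def split by (subst prod.union_disjoint) auto
    hence "Qs n z - Qs m z = Qs m z * ((\<Prod>i\<in>Sq n - Sq m. E (z / om i)) - 1)"
      by (simp add: algebra_simps)
    hence "norm (Qs n z - Qs m z) = norm (Qs m z) * norm ((\<Prod>i\<in>Sq n - Sq m. E (z / om i)) - 1)"
      by (simp add: norm_mult)
    also have "\<dots> \<le> 2 * (3/2 * \<delta> m)"
    proof (intro mult_mono)
      show "norm (Qs m z) \<le> 2" using Qs2[OF that(1), of m] by simp
      have "norm ((\<Prod>i\<in>Sq n - Sq m. E (z / om i)) - 1) \<le> exp (\<Sum>i\<in>Sq n - Sq m. norm (E (z / om i) - 1)) - 1"
        by (rule norm_prod_minus1_exp)
      also have "\<dots> \<le> exp (\<delta> m) - 1" using tail[of "Sq n - Sq m" m z] that by auto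
      also have "\<dots> \<le> 3/2 * \<delta> m" using \<delta>M \<delta>_nonneg \<delta>_mono[OF that(2)] by (intro exp_small) auto
      finally show "norm ((\<Prod>i\<in>Sq n - Sq m. E (z / om i)) - 1) \<le> 3/2 * \<delta> m" .
    qed auto
    finally show ?thesis by simp
  qed
  have "uniformly_Cauchy_on (cball 0 R) Qs"
  proof (rule uniformly_Cauchy_onI')
    fix e :: real assume e: "e > 0"
    obtain M0 :: nat where M0: "real M0 \<ge> 9 * R^3 / (c^3 * e) + 1" using real_arch_simple by blast
    define M1 where "M1 = max M M0"
    have "\<forall>x\<in>cball 0 R. \<forall>m\<ge>M1. \<forall>n>m. dist (Qs m x) (Qs n x) < e"
    proof safe
      fix x :: complex and m n :: nat assume x: "x \<in> cball 0 R" and m: "m \<ge> M1" and n: "n > m"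
      have "dist (Qs m x) (Qs n x) = norm (Qs n x - Qs m x)" by (simp add: dist_norm norm_minus_commute)
      also have "\<dots> \<le> 3 * \<delta> m" using x m n by (intro cauchy) (auto simp: M1_def)
      also have "\<dots> < e"
      proof -
        have mpos: "real m > 9 * R^3 / (c^3 * e)" using M0 m by (auto simp: M1_def)
        hence "9 * R^3 < real m * (c^3 * e)" using e cpos by (simp add: field_simps)
        moreover have "real m > 0" using mpos e cpos assms
          by (smt (verit) divide_nonneg_pos mult_pos_pos zero_less_power)
        ultimately show ?thesis unfolding \<delta>_def using e cpos by (simp add: field_simps)
      qed
      finally show "dist (Qs m x) (Qs n x) < e" .
    qed
    thus "\<exists>M. \<forall>x\<in>cball 0 R. \<forall>m\<ge>M. \<forall>n>m. dist (Qs m x) (Qs n x) < e" by blast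
  qed
  then obtain Q where Q: "uniform_limit (cball 0 R) Qs Q sequentially"
    using Cauchy_uniformly_convergent uniformly_convergent_on_def by blast
  have Q1: "norm (Q z - 1) \<le> 3/4" if "z \<in> cball 0 R" for z
  proof (rule Lim_norm_ubound)
    show "((\<lambda>N. Qs N z - 1) \<longlongrightarrow> Q z - 1) sequentially"
      by (intro tendsto_intros tendsto_uniform_limitI[OF Q that])
  qed (use Qs1[OF that] in auto)
  have Qnz: "Q z \<noteq> 0" if "z \<in> cball 0 R" for z
    using Q1[OF that] by auto
  have Qbd: "bounded (Q ` cball 0 R)"
  proof -
    have "norm (Q z) \<le> 7/4" if "z \<in> cball 0 R" for z
      using Q1[OF that] norm_triangle_ineq[of "Q z - 1" 1] by simp
    thus ?thesis unfolding bounded_iff by (intro exI[of _ "7/4"]) auto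
  qed
  have PMbd: "bounded (P M ` cball 0 R)"
    by (intro compact_imp_bounded compact_continuous_image holomorphic_on_imp_continuous_on)
       (auto intro!: holomorphic_intros)
  have "uniform_limit (cball 0 R) (\<lambda>N z. P M z * Qs N z) (\<lambda>z. P M z * Q z) sequentially"
    by (intro uniform_lim_mult uniform_limit_const Q PMbd Qbd)
  moreover have "eventually (\<lambda>N. \<forall>z\<in>cball 0 R. P M z * Qs N z = P N z) sequentially"
    using eventually_ge_at_top[of M]
  proof eventually_elim
    case (elim N)
    have split: "L N = L M \<union> (Sq N - Sq M)"
      using Sq_mono[OF elim] by (auto simp: L_def)
    show ?case
      unfolding P_def Qs_def split by (subst prod.union_disjoint) (auto simp: L_def)
  qed
  ultimately have "uniform_limit (cball 0 R) P (\<lambda>z. P M z * Q z) sequentially"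
    by (rule uniform_limit_cong[THEN iffD1, rotated 2]) auto
  thus ?thesis using Qnz by blast
qed

end

lemma deriv_odd:
  fixes f :: "complex \<Rightarrow> complex"
  assumes odd: "\<And>z. f (-z) = - f z" and d: "f field_differentiable at z"
  shows "deriv f (-z) = deriv f z"
proof -
  have D: "(f has_field_derivative deriv f z) (at z)"
    using d by (simp add: DERIV_deriv_iff_field_differentiable)
  have D': "(f has_field_derivative deriv f z) (at (- (-z)))" using D by simp
  have M: "((\<lambda>x::complex. -x) has_field_derivative -1) (at (-z))"
    by (auto intro!: derivative_eq_intros)
  have "((\<lambda>x. f (-x)) has_field_derivative deriv f z * -1) (at (-z))"
    by (rule DERIV_chain2[OF D' M])
  from DERIV_minus[OF this]
  have "((\<lambda>x. - f (- x)) has_field_derivative deriv f z) (at (-z))" by simp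
  moreover have "(\<lambda>x. - f (- x)) = f" using odd by (auto simp: fun_eq_iff)
  ultimately show ?thesis by (simp add: DERIV_imp_deriv)
qed

lemma deriv_cnj_sym:
  fixes f :: "complex \<Rightarrow> complex"
  assumes sym: "\<And>z. f (cnj z) = cnj (f z)" and d: "f field_differentiable at z"
  shows "deriv f (cnj z) = cnj (deriv f z)"
proof -
  have D: "(f has_field_derivative deriv f z) (at (cnj (cnj z)))"
    using d by (simp add: DERIV_deriv_iff_field_differentiable)
  have "((cnj \<circ> f \<circ> cnj) has_field_derivative cnj (deriv f z)) (at (cnj z))"
    by (rule has_field_derivative_cnj_cnj[OF D])
  moreover have "cnj \<circ> f \<circ> cnj = f" using sym
    by (auto simp: fun_eq_iff)
  ultimately show ?thesis by (simp add: DERIV_imp_deriv)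
qed

context rect begin

lemma np1: "0 < norm (z::complex) + 1"
  by (smt (verit) norm_ge_zero)

lemma sig_ulim:
  assumes "R > 0"
  shows "uniform_limit (cball 0 R) P sig sequentially"
proof -
  obtain M Q where U: "uniform_limit (cball 0 R) P (\<lambda>z. P M z * Q z) sequentially"
    using P_ulim[OF assms] by blast
  have "sig z = P M z * Q z" if "z \<in> cball 0 R" for z
    unfolding sig_lim_def using tendsto_uniform_limitI[OF U that] by (rule limI)
  hence "uniform_limit (cball 0 R) P (\<lambda>z. P M z * Q z) sequentially = uniform_limit (cball 0 R) P sig sequentially"
    by (intro uniform_limit_cong) auto
  thus ?thesis using U by simp
qed

lemma sig_tendsto: "(\<lambda>N. P N z) \<longlonglongrightarrow> sig z"
  by (rule tendsto_uniform_limitI[OF sig_ulim[of "norm z + 1"]]) (auto simp: np1)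

lemma sig_nz:
  assumes "z \<notin> range om"
  shows "sig z \<noteq> 0"
proof -
  define R where "R = norm z + 1"
  have R: "R > 0" "z \<in> cball 0 R" by (auto simp: R_def np1)
  obtain M Q where U: "uniform_limit (cball 0 R) P (\<lambda>z. P M z * Q z) sequentially"
    and Q: "\<forall>z\<in>cball 0 R. Q z \<noteq> 0"
    using P_ulim[OF R(1)] by blast
  have "sig z = P M z * Q z"
    unfolding sig_lim_def using tendsto_uniform_limitI[OF U R(2)] by (rule limI)
  moreover have "P M z \<noteq> 0"
  proof -
    have "z \<noteq> 0" using assms om_0 by (metis rangeI)
    moreover have "E (z / om i) \<noteq> 0" if "i \<in> L N" for i N
    proof
      assume "E (z / om i) = 0"
      hence "z / om i = 1" by (simp add: E_eq0)
      moreover have "om i \<noteq> 0" using that by (auto simp: L_def om_eq0)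
      ultimately have "z = om i" by (simp add: field_simps)
      thus False using assms by auto
    qed
    ultimately show ?thesis by (auto simp: P_def)
  qed
  ultimately show ?thesis using Q R by auto
qed

lemma sig_holo [holomorphic_intros]: "sig holomorphic_on A"
proof -
  have "sig holomorphic_on UNIV"
  proof (rule holomorphic_uniform_sequence[where f = P])
    fix x :: complex
    have "uniform_limit (cball x 1) P sig sequentially"
      by (rule uniform_limit_on_subset[OF sig_ulim[of "norm x + 1"]])
         (auto simp: cball_subset_cball_iff np1)
    thus "\<exists>d>0. cball x d \<subseteq> UNIV \<and> uniform_limit (cball x d) P sig sequentially"
      by (intro exI[of _ 1]) auto
  qed (auto intro: holomorphic_intros)
  thus ?thesis by (rule holomorphic_on_subset) auto
qed

lemma sig_diff: "sig field_differentiable at z"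
  using sig_holo[of UNIV] holomorphic_on_imp_differentiable_at by blast

definition neg :: "int \<times> int \<Rightarrow> int \<times> int" where "neg i = (- fst i, - snd i)"
definition flip :: "int \<times> int \<Rightarrow> int \<times> int" where "flip i = (fst i, - snd i)"

lemma om_neg: "om (neg i) = - om i" by (simp add: om_def neg_def algebra_simps)
lemma om_flip: "om (flip i) = cnj (om i)"
proof -
  have "cnj w' = - w'" by (simp add: complex_eq_iff re0)
  thus ?thesis by (simp add: om_def flip_def)
qed

lemma neg_L: "i \<in> L N \<Longrightarrow> neg i \<in> L N"
proof -
  have "(p,q) \<in> L N \<Longrightarrow> (-p,-q) \<in> L N" for p q by (auto simp: L_def in_Sq mx_def)
  thus "i \<in> L N \<Longrightarrow> neg i \<in> L N" by (cases i) (auto simp: neg_def)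
qed

lemma flip_L: "i \<in> L N \<Longrightarrow> flip i \<in> L N"
proof -
  have "(p,q) \<in> L N \<Longrightarrow> (p,-q) \<in> L N" for p q by (auto simp: L_def in_Sq mx_def)
  thus "i \<in> L N \<Longrightarrow> flip i \<in> L N" by (cases i) (auto simp: flip_def)
qed

lemma neg_neg: "neg (neg i) = i" and flip_flip: "flip (flip i) = i"
  by (auto simp: neg_def flip_def)

lemma P_odd: "P N (-z) = - P N z"
proof -
  have "(\<Prod>i\<in>L N. E (- z / om i)) = (\<Prod>i\<in>L N. E (z / om i))"
    by (rule prod.reindex_bij_witness[of _ neg neg]) (simp_all only: neg_neg neg_L om_neg divide_minus_right minus_divide_left)
  thus ?thesis by (simp add: P_def)
qed

lemma cnj_E: "cnj (E u) = E (cnj u)"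
  by (simp add: E_eq exp_cnj)

lemma P_cnj: "P N (cnj z) = cnj (P N z)"
proof -
  have "(\<Prod>i\<in>L N. E (cnj z / om i)) = (\<Prod>i\<in>L N. E (cnj z / cnj (om i)))"
    by (rule prod.reindex_bij_witness[of _ flip flip]) (simp_all only: flip_flip flip_L om_flip complex_cnj_cnj)
  thus ?thesis by (simp add: P_def cnj_E)
qed

lemma sig_odd: "sig (-z) = - sig z"
proof -
  have "(\<lambda>N. P N (-z)) \<longlonglongrightarrow> - sig z"
    unfolding P_odd by (intro tendsto_intros sig_tendsto)
  thus ?thesis using sig_tendsto[of "-z"] LIMSEQ_unique by blast
qed

lemma sig_cnj: "sig (cnj z) = cnj (sig z)"
proof -
  have "(\<lambda>N. P N (cnj z)) \<longlonglongrightarrow> cnj (sig z)"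
    unfolding P_cnj by (intro tendsto_intros sig_tendsto)
  thus ?thesis using sig_tendsto[of "cnj z"] LIMSEQ_unique by blast
qed

lemma dsig_even: "deriv sig (-z) = deriv sig z"
  by (rule deriv_odd[OF sig_odd sig_diff])

lemma dsig_cnj: "deriv sig (cnj z) = cnj (deriv sig z)"
  by (rule deriv_cnj_sym[OF sig_cnj sig_diff])

definition zet :: "complex \<Rightarrow> complex" where "zet z = deriv sig z / sig z"

lemma zet_eq: "wzeta (of_real w) w' = zet"
  by (auto simp: fun_eq_iff wzeta_def zet_def sig_def)

lemma zet_odd: "zet (-z) = - zet z"
  by (simp add: zet_def sig_odd dsig_even)

lemma zet_cnj: "zet (cnj z) = cnj (zet z)"
  by (simp add: zet_def sig_cnj dsig_cnj)

end

definition Fx :: "complex \<Rightarrow> complex \<Rightarrow> complex \<Rightarrow> complex \<Rightarrow> complex" where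
  "Fx a0 a1 a2 a3 = (a3 * a0^2 - 3 * a0 * a1 * a2 + 2 * a1^3) / a0^3"

lemma logderiv2:
  fixes f :: "complex \<Rightarrow> complex"
  assumes holo: "f holomorphic_on U" and U: "open U" "z \<in> U" and nz: "\<And>y. y \<in> U \<Longrightarrow> f y \<noteq> 0"
  shows "deriv (deriv (\<lambda>y. deriv f y / f y)) z =
           Fx (f z) (deriv f z) (deriv (deriv f) z) (deriv (deriv (deriv f)) z)"
proof -
  define f1 where "f1 = deriv f"
  define f2 where "f2 = deriv f1"
  define f3 where "f3 = deriv f2"
  have h1: "f1 holomorphic_on U" unfolding f1_def using holo U by (intro holomorphic_deriv)
  have h2: "f2 holomorphic_on U" unfolding f2_def using h1 U by (intro holomorphic_deriv)
  have d0: "(f has_field_derivative f1 y) (at y)" if "y \<in> U" for y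
    unfolding f1_def using holomorphic_derivI[OF holo U(1) that] .
  have d1: "(f1 has_field_derivative f2 y) (at y)" if "y \<in> U" for y
    unfolding f2_def using holomorphic_derivI[OF h1 U(1) that] .
  have d2: "(f2 has_field_derivative f3 y) (at y)" if "y \<in> U" for y
    unfolding f3_def using holomorphic_derivI[OF h2 U(1) that] .
  have Z1: "deriv (\<lambda>y. f1 y / f y) y = (f2 y * f y - f1 y * f1 y) / (f y * f y)" if "y \<in> U" for y
    by (rule DERIV_imp_deriv, rule DERIV_divide[OF d1[OF that] d0[OF that] nz[OF that]])
  have ev: "eventually (\<lambda>y. deriv (\<lambda>y. f1 y / f y) y = (f2 y * f y - f1 y * f1 y) / (f y * f y)) (nhds z)"
    using eventually_nhds_in_open[OF U] by eventually_elim (rule Z1)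
  have "deriv (deriv (\<lambda>y. f1 y / f y)) z = deriv (\<lambda>y. (f2 y * f y - f1 y * f1 y) / (f y * f y)) z"
    by (rule deriv_cong_ev[OF ev refl])
  also have "\<dots> = Fx (f z) (f1 z) (f2 z) (f3 z)"
  proof (rule DERIV_imp_deriv)
    have A: "((\<lambda>y. f2 y * f y - f1 y * f1 y) has_field_derivative
               (f3 z * f z + f1 z * f2 z) - (f2 z * f1 z + f2 z * f1 z)) (at z)"
      by (intro DERIV_diff DERIV_mult d0 d1 d2 U(2))
    have B: "((\<lambda>y. f y * f y) has_field_derivative (f1 z * f z + f1 z * f z)) (at z)"
      by (intro DERIV_mult d0 U(2))
    have "((\<lambda>y. (f2 y * f y - f1 y * f1 y) / (f y * f y)) has_field_derivative
       (((f3 z * f z + f1 z * f2 z) - (f2 z * f1 z + f2 z * f1 z)) * (f z * f z) -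
        (f2 z * f z - f1 z * f1 z) * (f1 z * f z + f1 z * f z)) / (f z * f z * (f z * f z))) (at z)"
      by (rule DERIV_divide[OF A B]) (use nz[OF U(2)] in simp)
    moreover have "(((f3 z * f z + f1 z * f2 z) - (f2 z * f1 z + f2 z * f1 z)) * (f z * f z) -
        (f2 z * f z - f1 z * f1 z) * (f1 z * f z + f1 z * f z)) / (f z * f z * (f z * f z))
        = Fx (f z) (f1 z) (f2 z) (f3 z)"
      using nz[OF U(2)] unfolding Fx_def
      by (simp add: field_simps power2_eq_square power3_eq_cube)
    ultimately show "((\<lambda>y. (f2 y * f y - f1 y * f1 y) / (f y * f y)) has_field_derivative
       Fx (f z) (f1 z) (f2 z) (f3 z)) (at z)" by simp
  qed
  finally show ?thesis by (simp add: f1_def f2_def f3_def)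
qed

lemma int_sum_shift:
  fixes h :: "int \<Rightarrow> complex"
  assumes "k \<ge> 0"
  shows "(\<Sum>n\<in>{-k..k}. h (n - 1)) - (\<Sum>n\<in>{-k..k}. h n) = h (-k-1) - h k"
proof -
  have "(\<Sum>n\<in>{-k..k}. h (n - 1)) = (\<Sum>n\<in>{-k-1..k-1}. h n)"
    by (rule sum.reindex_bij_witness[of _ "\<lambda>n. n + 1" "\<lambda>n. n - 1"]) auto
  also have "{-k-1..k-1} = insert (-k-1) {-k..k-1}" using assms by auto
  also have "(\<Sum>n\<in>insert (-k-1) {-k..k-1}. h n) = h (-k-1) + (\<Sum>n\<in>{-k..k-1}. h n)"
    by (subst sum.insert) auto
  finally have A: "(\<Sum>n\<in>{-k..k}. h (n - 1)) = h (-k-1) + (\<Sum>n\<in>{-k..k-1}. h n)" .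
  have "{-k..k} = insert k {-k..k-1}" using assms by auto
  hence B: "(\<Sum>n\<in>{-k..k}. h n) = h k + (\<Sum>n\<in>{-k..k-1}. h n)"
    by (simp add: sum.insert)
  show ?thesis by (simp add: A B)
qed

lemma term_d1:
  fixes a y :: complex
  assumes "y \<noteq> a"
  shows "((\<lambda>y. 1/(y-a) + 1/a + y/a^2) has_field_derivative (-1/(y-a)^2 + 1/a^2)) (at y)"
proof -
  have e: "(\<lambda>y. 1/(y-a) + 1/a + y/a^2) = (\<lambda>y. 1/(y-a) + 1/a + y * (1/a^2))"
    by (simp add: fun_eq_iff)
  have d1: "((\<lambda>y. 1/(y-a)) has_field_derivative -1/(y-a)^2) (at y)"
    using assms by (auto intro!: derivative_eq_intros simp: power2_eq_square)
  have d2: "((\<lambda>y. y * (1/a^2)) has_field_derivative 1 * (1/a^2)) (at y)"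
    by (rule DERIV_cmult_right[OF DERIV_ident])
  have "((\<lambda>y. 1/(y-a) + 1/a + y * (1/a^2)) has_field_derivative -1/(y-a)^2 + 0 + 1 * (1/a^2)) (at y)"
    by (intro DERIV_add d1 d2 DERIV_const)
  thus ?thesis unfolding e by simp
qed

lemma term_d2_aux:
  fixes t :: complex
  assumes "t \<noteq> 0"
  shows "((\<lambda>t. -1/t^2) has_field_derivative 2/t^3) (at t)"
  using assms by (auto intro!: derivative_eq_intros simp: field_simps power2_eq_square power3_eq_cube)

lemma term_d2:
  fixes a y :: complex
  assumes "y \<noteq> a"
  shows "((\<lambda>y. -1/(y-a)^2 + 1/a^2) has_field_derivative 2/(y-a)^3) (at y)"
proof -
  have d: "((\<lambda>y. y - a) has_field_derivative 1) (at y)"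
    by (auto intro!: derivative_eq_intros)
  have "((\<lambda>y. -1/(y-a)^2) has_field_derivative 2/(y-a)^3 * 1) (at y)"
    using DERIV_chain2[OF term_d2_aux d] assms by simp
  hence "((\<lambda>y. -1/(y-a)^2 + 1/a^2) has_field_derivative 2/(y-a)^3 * 1 + 0) (at y)"
    by (intro DERIV_add DERIV_const)
  thus ?thesis by simp
qed

context rect begin

lemma E_deriv: "(E has_field_derivative (- (u^2) * exp (u + u^2/2))) (at u)"
proof -
  have Eeq: "E = (\<lambda>u. (1-u) * exp (u + u^2/2))"
    by (auto simp: fun_eq_iff E_eq)
  show ?thesis unfolding Eeq
    by (auto intro!: derivative_eq_intros simp: algebra_simps power2_eq_square)
qed

lemma Ecomp_deriv:
  "((\<lambda>y. E (y / a)) has_field_derivative (- ((y/a)^2) * exp (y/a + (y/a)^2/2)) / a) (at y)"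
proof -
  have d: "((\<lambda>y. y / a) has_field_derivative 1 / a) (at y)"
    by (rule DERIV_cdivide[OF DERIV_ident])
  show ?thesis using DERIV_chain2[OF E_deriv d] by simp
qed

lemma logderiv_term:
  assumes "a \<noteq> 0" "y \<noteq> a"
  shows "((- ((y/a)^2) * exp (y/a + (y/a)^2/2)) / a) / E (y/a) = 1/(y-a) + 1/a + y/a^2"
proof -
  define X where "X = exp (y/a + (y/a)^2/2)"
  have X0: "X \<noteq> 0" by (simp add: X_def)
  have EE: "E (y/a) = (1 - y/a) * X" by (simp add: E_eq X_def)
  have ya: "y - a \<noteq> 0" "a - y \<noteq> 0" using assms by auto
  show ?thesis unfolding EE X_def[symmetric] using assms X0 ya
    by (simp add: field_simps power2_eq_square)
qed

definition R :: "nat \<Rightarrow> complex \<Rightarrow> complex" where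
  "R N y = (\<Sum>i\<in>Sq N. 1/(y - om i) + 1/om i + y/(om i)^2)"
definition R1 :: "nat \<Rightarrow> complex \<Rightarrow> complex" where
  "R1 N y = (\<Sum>i\<in>Sq N. -1/(y - om i)^2 + 1/(om i)^2)"
definition T :: "nat \<Rightarrow> complex \<Rightarrow> complex" where
  "T N y = (\<Sum>i\<in>Sq N. 1/(y - om i)^3)"

lemma Sq_insert: "Sq N = insert (0,0) (L N)" and zero_notin_L: "(0,0) \<notin> L N"
  by (auto simp: L_def)

lemma P_nz: "y \<notin> om ` Sq N \<Longrightarrow> P N y \<noteq> 0"
proof -
  assume y: "y \<notin> om ` Sq N"
  have "y \<noteq> 0" using y om_0 zero_in_Sq by (metis image_eqI)
  moreover have "E (y / om i) \<noteq> 0" if "i \<in> L N" for i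
  proof
    assume "E (y / om i) = 0"
    hence "y / om i = 1" by (simp add: E_eq0)
    moreover have "om i \<noteq> 0" using that by (auto simp: L_def om_eq0)
    ultimately have "y = om i" by (simp add: field_simps)
    thus False using y that by (auto simp: L_def)
  qed
  ultimately show ?thesis by (auto simp: P_def)
qed

lemma P_logderiv:
  assumes y: "y \<notin> om ` Sq N"
  shows "deriv (P N) y / P N y = R N y"
proof -
  have y0: "y \<noteq> 0" using y om_0 zero_in_Sq by (metis image_eqI)
  have omnz: "om i \<noteq> 0" if "i \<in> L N" for i using that by (auto simp: L_def om_eq0)
  have yom: "y \<noteq> om i" if "i \<in> L N" for i using that y by (auto simp: L_def)
  have Enz: "E (y / om i) \<noteq> 0" if "i \<in> L N" for i
    using omnz[OF that] yom[OF that] by (auto simp: E_eq0 field_simps)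
  define F' where "F' = (\<lambda>i. (- ((y/om i)^2) * exp (y/om i + (y/om i)^2/2)) / om i)"
  have Ec: "((\<lambda>u. E (u / om i)) has_field_derivative F' i) (at y)" for i
    unfolding F'_def by (rule Ecomp_deriv)
  define PP where "PP = (\<Prod>i\<in>L N. E (y / om i))"
  define S where "S = (\<Sum>i\<in>L N. F' i / E (y / om i))"
  have dprod: "((\<lambda>u. \<Prod>i\<in>L N. E (u / om i)) has_field_derivative PP * S) (at y)"
    unfolding PP_def S_def
    by (rule has_field_derivative_prod'[of "L N" "\<lambda>i u. E (u / om i)" y F'])
       (auto simp: Enz Ec)
  have "P N = (\<lambda>u. u * (\<Prod>i\<in>L N. E (u / om i)))" by (auto simp: fun_eq_iff P_def)
  hence "(P N has_field_derivative 1 * PP + (PP * S) * y) (at y)"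
    using DERIV_mult[OF DERIV_ident dprod] unfolding PP_def by simp
  hence "deriv (P N) y = PP + PP * S * y" by (simp add: DERIV_imp_deriv)
  moreover have "P N y = y * PP" by (simp add: P_def PP_def)
  moreover have "PP \<noteq> 0" unfolding PP_def using Enz by auto
  ultimately have "deriv (P N) y / P N y = 1/y + S" using y0 by (simp add: field_simps)
  also have "S = (\<Sum>i\<in>L N. 1/(y - om i) + 1/om i + y/(om i)^2)"
    unfolding S_def F'_def by (intro sum.cong refl logderiv_term omnz yom)
  also have "1/y + \<dots> = R N y"
    unfolding R_def Sq_insert by (subst sum.insert) (auto simp: zero_notin_L om_0)
  finally show ?thesis .
qed

lemma open_V: "open (- (om ` Sq N))"
  by (intro open_Compl finite_imp_closed) auto

lemma R_deriv: "y \<notin> om ` Sq N \<Longrightarrow> (R N has_field_derivative R1 N y) (at y)"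
  unfolding R_def[abs_def] R1_def
  by (rule DERIV_sum, rule term_d1) auto

lemma R1_deriv:
  assumes "y \<notin> om ` Sq N"
  shows "(R1 N has_field_derivative 2 * T N y) (at y)"
proof -
  have "(R1 N has_field_derivative (\<Sum>i\<in>Sq N. 2/(y - om i)^3)) (at y)"
    unfolding R1_def[abs_def] by (rule DERIV_sum, rule term_d2) (use assms in auto)
  thus ?thesis by (simp add: T_def sum_distrib_left)
qed

lemma P_d2:
  assumes z: "z \<notin> om ` Sq N"
  shows "deriv (deriv (\<lambda>y. deriv (P N) y / P N y)) z = 2 * T N z"
proof -
  have e1: "deriv (\<lambda>y. deriv (P N) y / P N y) y = R1 N y" if "y \<in> - (om ` Sq N)" for y
  proof -
    have "eventually (\<lambda>u. deriv (P N) u / P N u = R N u) (nhds y)"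
      using eventually_nhds_in_open[OF open_V that] by eventually_elim (auto simp: P_logderiv)
    hence "deriv (\<lambda>y. deriv (P N) y / P N y) y = deriv (R N) y" by (rule deriv_cong_ev) simp
    also have "\<dots> = R1 N y" using R_deriv that by (simp add: DERIV_imp_deriv)
    finally show ?thesis .
  qed
  have "eventually (\<lambda>u. u \<in> - (om ` Sq N)) (nhds z)"
    by (rule eventually_nhds_in_open[OF open_V]) (use z in auto)
  hence "eventually (\<lambda>u. deriv (\<lambda>y. deriv (P N) y / P N y) u = R1 N u) (nhds z)"
    by eventually_elim (rule e1)
  hence "deriv (deriv (\<lambda>y. deriv (P N) y / P N y)) z = deriv (R1 N) z" by (rule deriv_cong_ev) simp
  also have "\<dots> = 2 * T N z" using R1_deriv z by (simp add: DERIV_imp_deriv)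
  finally show ?thesis .
qed

end

context rect begin

lemma open_sig_nz: "open {y. sig y \<noteq> 0}"
  by (rule open_Collect_neq) (auto intro: holomorphic_on_imp_continuous_on sig_holo)

lemma zet_fun: "zet = (\<lambda>y. deriv sig y / sig y)"
  by (simp add: fun_eq_iff zet_def)

lemma hd_lim: "(\<lambda>N. (deriv ^^ m) (P N) z) \<longlonglongrightarrow> (deriv ^^ m) sig z"
proof (rule higher_deriv_complex_uniform_limit)
  show "uniform_limit (ball 0 (norm z + 1)) P sig sequentially"
    by (rule uniform_limit_on_subset[OF sig_ulim[of "norm z + 1"]]) (auto simp: np1)
qed (auto intro: always_eventually holomorphic_intros)

lemma hd1: "(\<lambda>N. deriv (P N) z) \<longlonglongrightarrow> deriv sig z"
  using hd_lim[of 1] by simp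
lemma hd2: "(\<lambda>N. deriv (deriv (P N)) z) \<longlonglongrightarrow> deriv (deriv sig) z"
  using hd_lim[of 2] by (simp add: numeral_2_eq_2)
lemma hd3: "(\<lambda>N. deriv (deriv (deriv (P N))) z) \<longlonglongrightarrow> deriv (deriv (deriv sig)) z"
  using hd_lim[of 3] by (simp add: numeral_3_eq_3)

lemma Z2_lim:
  assumes z: "z \<notin> range om"
  shows "(\<lambda>N. 2 * T N z) \<longlonglongrightarrow> deriv (deriv zet) z"
proof -
  have zN: "z \<in> - (om ` Sq N)" for N using z by auto
  have eqN: "2 * T N z = Fx (P N z) (deriv (P N) z) (deriv (deriv (P N)) z) (deriv (deriv (deriv (P N))) z)" for N
    using P_d2[of z N] logderiv2[OF P_holo open_V zN, of N] P_nz zN by auto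
  have sz: "sig z \<noteq> 0" using sig_nz[OF z] .
  have eq: "deriv (deriv zet) z = Fx (sig z) (deriv sig z) (deriv (deriv sig) z) (deriv (deriv (deriv sig)) z)"
    unfolding zet_fun by (rule logderiv2[OF sig_holo open_sig_nz]) (use sz in auto)
  have "(\<lambda>N. Fx (P N z) (deriv (P N) z) (deriv (deriv (P N)) z) (deriv (deriv (deriv (P N))) z))
          \<longlonglongrightarrow> Fx (sig z) (deriv sig z) (deriv (deriv sig) z) (deriv (deriv (deriv sig)) z)"
    unfolding Fx_def by (intro tendsto_intros sig_tendsto hd1 hd2 hd3) (use sz in auto)
  thus ?thesis unfolding eqN eq .
qed

lemma T_iter: "T N y = (\<Sum>m\<in>{-int N..int N}. \<Sum>n\<in>{-int N..int N}. 1/(y - om (m,n))^3)"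
  unfolding T_def Sq_def by (simp add: sum.cartesian_product)

lemma om_shift: "z + 2 * w' - om (m, n) = z - om (m, n - 1)"
  by (simp add: om_def algebra_simps)

lemma T_shift: "(\<lambda>N. T N (z + 2 * w') - T N z) \<longlonglongrightarrow> 0"
proof (rule Lim_null_comparison)
  obtain N0 :: nat where N0: "real N0 \<ge> norm z / c + 1" using real_arch_simple by blast
  have N0': "N0 \<ge> 1" "c * real N0 \<ge> norm z"
  proof -
    have "norm z / c \<ge> 0" using cpos by simp
    thus "N0 \<ge> 1" using N0 by linarith
    have "norm z / c \<le> real N0" using N0 by linarith
    thus "c * real N0 \<ge> norm z" using cpos by (simp add: field_simps)
  qed
  show "eventually (\<lambda>N. norm (T N (z + 2 * w') - T N z) \<le> (6 / c^3) / real N) sequentially"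
    using eventually_ge_at_top[of N0]
  proof eventually_elim
    case (elim N)
    have N1: "N \<ge> 1" and cN: "c * real N \<ge> norm z"
      using elim N0' cpos by (auto intro: order.trans[OF _ mult_left_mono])
    define h where "h = (\<lambda>m n. 1/(z - om (m,n))^3)"
    have hb: "norm (h m n) \<le> 1 / (c * N)^3" if "\<bar>n\<bar> \<ge> int N" for m n
    proof -
      have "2 * c * N \<le> 2 * c * real_of_int (mx (m,n))"
        using that cpos by (intro mult_left_mono) (auto simp: mx_def)
      also have "\<dots> \<le> norm (om (m,n))" by (rule norm_om_ge)
      finally have "2 * c * N \<le> norm (om (m,n))" .
      hence cz: "c * N \<le> norm (z - om (m,n))"
        using cN norm_triangle_ineq2[of "om (m,n)" z] by (simp add: norm_minus_commute)
      have cN0: "c * N > 0" using cpos N1 by simp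
      have pos: "norm (z - om (m,n))^3 * (c * N)^3 > 0"
      proof -
        have "norm (z - om (m,n)) > 0" using cz cN0 by linarith
        thus ?thesis using cN0 by simp
      qed
      have p3: "(c * N)^3 \<le> norm (z - om (m,n))^3" using cz cN0 by (intro power_mono) auto
      have "norm (h m n) = 1 / norm (z - om (m,n))^3" by (simp add: h_def norm_divide norm_power)
      also have "\<dots> \<le> 1 / (c * N)^3"
        by (rule divide_left_mono) (use p3 pos in auto)
      finally show ?thesis .
    qed
    have "T N (z + 2 * w') - T N z =
          (\<Sum>m\<in>{-int N..int N}. (\<Sum>n\<in>{-int N..int N}. h m (n - 1)) - (\<Sum>n\<in>{-int N..int N}. h m n))"
      unfolding T_iter om_shift h_def by (simp add: sum_subtractf)
    also have "\<dots> = (\<Sum>m\<in>{-int N..int N}. h m (-int N - 1) - h m (int N))"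
      by (intro sum.cong refl int_sum_shift) auto
    finally have "norm (T N (z + 2 * w') - T N z) \<le> (\<Sum>m\<in>{-int N..int N}. norm (h m (-int N - 1) - h m (int N)))"
      by (simp add: norm_sum)
    also have "\<dots> \<le> (\<Sum>m\<in>{-int N..int N}. 2 / (c * N)^3)"
    proof (intro sum_mono)
      fix m
      have "norm (h m (-int N - 1) - h m (int N)) \<le> norm (h m (-int N - 1)) + norm (h m (int N))"
        by (rule norm_triangle_ineq4)
      also have "\<dots> \<le> 1 / (c * N)^3 + 1 / (c * N)^3" by (intro add_mono hb) auto
      finally show "norm (h m (-int N - 1) - h m (int N)) \<le> 2 / (c * N)^3" by simp
    qed
    also have "\<dots> = (2 * N + 1) * (2 / (c * N)^3)"
      by (simp add: card_atLeastAtMost_int)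
    also have "\<dots> \<le> (3 * N) * (2 / (c * N)^3)"
      using N1 cpos by (intro mult_right_mono) auto
    also have "\<dots> = (6 / c^3) / (real N * real N)"
      using N1 cpos by (simp add: field_simps power3_eq_cube)
    also have "\<dots> \<le> (6 / c^3) / real N"
    proof (rule divide_left_mono)
      show "real N \<le> real N * real N" using N1 by (simp add: mult_le_cancel_left1)
      show "0 < real N * real N * real N" using N1 by simp
    qed (use cpos in auto)
    finally show ?case .
  qed
  show "(\<lambda>N. (6 / c^3) / real N) \<longlonglongrightarrow> 0" by (rule lim_const_over_n)
qed

lemma Z2_periodic:
  assumes "z \<notin> range om" "z + 2 * w' \<notin> range om"
  shows "deriv (deriv zet) (z + 2 * w') = deriv (deriv zet) z"
proof -
  have "(\<lambda>N. 2 * T N (z + 2 * w') - 2 * T N z) \<longlonglongrightarrow> deriv (deriv zet) (z + 2 * w') - deriv (deriv zet) z"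
    by (intro tendsto_intros Z2_lim assms)
  moreover have "(\<lambda>N. 2 * T N (z + 2 * w') - 2 * T N z) \<longlonglongrightarrow> 2 * 0"
    unfolding right_diff_distrib[symmetric] by (intro tendsto_intros T_shift)
  ultimately show ?thesis using LIMSEQ_unique by fastforce
qed

end

context rect begin

definition S :: "complex set" where "S = {z. Im z > -3/2 * b} \<inter> {z. Im z < -b/2}"

lemma convex_S: "convex S"
  unfolding S_def by (intro convex_Int convex_halfspace_Im_gt convex_halfspace_Im_lt)

lemma open_S: "open S"
  unfolding S_def by (intro open_Int open_Collect_less continuous_intros)

lemma off_lat:
  assumes "\<And>n::int. Im y \<noteq> 2 * of_int n * b"
  shows "y \<notin> range om"
proof
  assume "y \<in> range om"
  then obtain i where "y = om i" by auto
  thus False using assms[of "snd i"] by (simp add: Im_om)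
qed

lemma S_off: "z \<in> S \<Longrightarrow> z \<notin> range om"
proof (rule off_lat)
  fix n :: int assume z: "z \<in> S"
  show "Im z \<noteq> 2 * of_int n * b"
  proof
    assume eq: "Im z = 2 * of_int n * b"
    show False
    proof (cases "n \<ge> 0")
      case True
      hence "2 * of_int n * b \<ge> 0" using bpos by simp
      thus False using z eq bpos by (simp add: S_def; linarith)
    next
      case False
      hence "of_int n \<le> (-1::real)" by simp
      hence "2 * of_int n * b \<le> 2 * (-1) * b" using bpos by (intro mult_right_mono) auto
      thus False using z eq bpos by (simp add: S_def; linarith)
    qed
  qed
qed

lemma S_shift_off: "z \<in> S \<Longrightarrow> z + 2 * w' \<notin> range om"
proof (rule off_lat)
  fix n :: int assume z: "z \<in> S"
  have Im2: "Im (z + 2 * w') = Im z + 2 * b" by (simp add: b_def)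
  show "Im (z + 2 * w') \<noteq> 2 * of_int n * b"
  proof
    assume eq: "Im (z + 2 * w') = 2 * of_int n * b"
    show False
    proof (cases "n \<ge> 1")
      case True
      hence "of_int n \<ge> (1::real)" by simp
      hence "2 * of_int n * b \<ge> 2 * 1 * b" using bpos by (intro mult_right_mono) auto
      thus False using z eq bpos Im2 by (simp add: S_def; linarith)
    next
      case False
      hence "of_int n \<le> (0::real)" by simp
      hence "2 * of_int n * b \<le> 0" using bpos by (simp add: mult_nonpos_nonneg)
      thus False using z eq bpos Im2 by (simp add: S_def; linarith)
    qed
  qed
qed

lemma w'_S: "- w' \<in> S" using bpos by (simp add: S_def b_def)

definition U :: "complex set" where "U = {y. sig y \<noteq> 0}"

lemma open_U: "open U" using open_sig_nz[unfolded sig_def] by (simp add: sig_def U_def)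

lemma S_U: "z \<in> S \<Longrightarrow> z \<in> U" and S_U': "z \<in> S \<Longrightarrow> z + 2 * w' \<in> U"
  using S_off S_shift_off sig_nz by (auto simp: U_def)

lemma zet_holo: "zet holomorphic_on U"
proof -
  have d: "deriv sig holomorphic_on UNIV" by (intro holomorphic_deriv sig_holo) auto
  show ?thesis unfolding zet_fun U_def
    by (intro holomorphic_on_divide holomorphic_on_subset[OF d] sig_holo) auto
qed

lemma Z1_holo: "deriv zet holomorphic_on U"
  by (intro holomorphic_deriv zet_holo open_U)

lemma shift_deriv:
  assumes "f holomorphic_on U" "z + 2 * w' \<in> U"
  shows "((\<lambda>z. f (z + 2 * w')) has_field_derivative deriv f (z + 2 * w')) (at z)"
proof -
  have d: "(f has_field_derivative deriv f (z + 2 * w')) (at (z + 2 * w'))"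
    by (rule holomorphic_derivI[OF assms(1) open_U assms(2)])
  have e: "((\<lambda>z. z + 2 * w') has_field_derivative 1) (at z)"
    by (auto intro!: derivative_eq_intros)
  show ?thesis using DERIV_chain2[OF d e] by simp
qed

lemma const_on_S:
  assumes "\<And>z. z \<in> S \<Longrightarrow> (f has_field_derivative 0) (at z)"
  shows "\<forall>z\<in>S. f z = f (- w')"
proof -
  obtain k where "\<forall>x\<in>S. f x = k"
    using has_field_derivative_zero_constant[OF convex_S] assms has_field_derivative_at_within by blast
  thus ?thesis using w'_S by auto
qed

lemma w'_U: "w' \<in> U" and mw'_U: "- w' \<in> U"
  using S_U'[OF w'_S] S_U[OF w'_S] by auto

lemma Z1_periodic: "z \<in> S \<Longrightarrow> deriv zet (z + 2 * w') = deriv zet z"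
proof -
  have "\<forall>z\<in>S. deriv zet (z + 2 * w') - deriv zet z = deriv zet (- w' + 2 * w') - deriv zet (- w')"
  proof (rule const_on_S)
    fix z assume z: "z \<in> S"
    have "((\<lambda>z. deriv zet (z + 2 * w') - deriv zet z) has_field_derivative
             deriv (deriv zet) (z + 2 * w') - deriv (deriv zet) z) (at z)"
      by (intro DERIV_diff shift_deriv Z1_holo S_U' z holomorphic_derivI[OF Z1_holo open_U S_U[OF z]])
    moreover have "deriv (deriv zet) (z + 2 * w') = deriv (deriv zet) z"
      by (rule Z2_periodic[OF S_off[OF z] S_shift_off[OF z]])
    ultimately show "((\<lambda>z. deriv zet (z + 2 * w') - deriv zet z) has_field_derivative 0) (at z)"
      by simp
  qed
  moreover have "deriv zet (- w') = deriv zet w'"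
    by (rule deriv_odd[where f=zet, OF zet_odd]) (use zet_holo w'_U open_U in \<open>auto intro: holomorphic_on_imp_differentiable_at\<close>)
  ultimately show "z \<in> S \<Longrightarrow> deriv zet (z + 2 * w') = deriv zet z" by auto
qed

definition eta where "eta = zet w'"

lemma zet_shift: "z \<in> S \<Longrightarrow> zet (z + 2 * w') = zet z + 2 * eta"
proof -
  have "\<forall>z\<in>S. zet (z + 2 * w') - zet z = zet (- w' + 2 * w') - zet (- w')"
  proof (rule const_on_S)
    fix z assume z: "z \<in> S"
    have "((\<lambda>z. zet (z + 2 * w') - zet z) has_field_derivative
             deriv zet (z + 2 * w') - deriv zet z) (at z)"
      by (intro DERIV_diff shift_deriv zet_holo S_U' z holomorphic_derivI[OF zet_holo open_U S_U[OF z]])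
    thus "((\<lambda>z. zet (z + 2 * w') - zet z) has_field_derivative 0) (at z)"
      using Z1_periodic[OF z] by simp
  qed
  moreover have "zet (- w') = - zet w'" by (rule zet_odd)
  ultimately show "z \<in> S \<Longrightarrow> zet (z + 2 * w') = zet z + 2 * eta"
    by (auto simp: eta_def algebra_simps)
qed

lemma sig_quasi: "z \<in> S \<Longrightarrow> sig (z + 2 * w') = - exp (2 * eta * (z + w')) * sig z"
proof -
  define h where "h = (\<lambda>z. sig (z + 2 * w') * exp (- 2 * eta * z) / sig z)"
  have "\<forall>z\<in>S. h z = h (- w')"
  proof (rule const_on_S)
    fix z assume z: "z \<in> S"
    have s0: "sig z \<noteq> 0" and s1: "sig (z + 2 * w') \<noteq> 0" using S_U[OF z] S_U'[OF z] by (auto simp: U_def)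
    have ds: "(sig has_field_derivative deriv sig y) (at y)" for y
      by (rule holomorphic_derivI[OF sig_holo[of UNIV]]) auto
    have ds2: "((\<lambda>z. sig (z + 2 * w')) has_field_derivative deriv sig (z + 2 * w')) (at z)"
    proof -
      have e: "((\<lambda>z. z + 2 * w') has_field_derivative 1) (at z)"
        by (auto intro!: derivative_eq_intros)
      show ?thesis using DERIV_chain2[OF ds e] by simp
    qed
    have de: "((\<lambda>z. exp (- 2 * eta * z)) has_field_derivative exp (- 2 * eta * z) * (- 2 * eta)) (at z)"
      by (auto intro!: derivative_eq_intros)
    have "(h has_field_derivative
       ((deriv sig (z + 2 * w') * exp (- 2 * eta * z) + exp (- 2 * eta * z) * (- 2 * eta) * sig (z + 2 * w')) * sig z
         - sig (z + 2 * w') * exp (- 2 * eta * z) * deriv sig z) / (sig z * sig z)) (at z)"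
      unfolding h_def by (intro DERIV_divide DERIV_mult ds2 de ds s0)
    moreover have "((deriv sig (z + 2 * w') * exp (- 2 * eta * z) + exp (- 2 * eta * z) * (- 2 * eta) * sig (z + 2 * w')) * sig z
         - sig (z + 2 * w') * exp (- 2 * eta * z) * deriv sig z) / (sig z * sig z) = 0"
    proof -
      have "deriv sig (z + 2 * w') / sig (z + 2 * w') = deriv sig z / sig z + 2 * eta"
        using zet_shift[OF z] by (simp add: zet_def)
      hence hyp: "deriv sig (z + 2 * w') * sig z = deriv sig z * sig (z + 2 * w') + 2 * eta * sig z * sig (z + 2 * w')"
        using s0 s1 by (simp add: field_simps)
      have "((deriv sig (z + 2 * w') * exp (- 2 * eta * z) + exp (- 2 * eta * z) * (- 2 * eta) * sig (z + 2 * w')) * sig z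
         - sig (z + 2 * w') * exp (- 2 * eta * z) * deriv sig z) =
         exp (- 2 * eta * z) * (deriv sig (z + 2 * w') * sig z - (deriv sig z * sig (z + 2 * w') + 2 * eta * sig z * sig (z + 2 * w')))"
        by (simp add: algebra_simps)
      also have "\<dots> = 0" by (simp add: hyp)
      finally show ?thesis by simp
    qed
    ultimately show "(h has_field_derivative 0) (at z)" by (rule DERIV_cong)
  qed
  moreover have "h (- w') = - exp (2 * eta * w')"
  proof -
    have "sig (- w') \<noteq> 0" using mw'_U by (simp add: U_def)
    thus ?thesis unfolding h_def by (simp add: sig_odd)
  qed
  ultimately have H: "z \<in> S \<Longrightarrow> h z = - exp (2 * eta * w')" for z by auto
  assume z: "z \<in> S"
  have s0: "sig z \<noteq> 0" using S_U[OF z] by (auto simp: U_def)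
  have "sig (z + 2 * w') * exp (- 2 * eta * z) = - exp (2 * eta * w') * sig z"
    using H[OF z] s0 unfolding h_def by (simp add: field_simps)
  hence "sig (z + 2 * w') = - exp (2 * eta * w') * sig z * exp (2 * eta * z)"
    by (simp add: exp_minus field_simps)
  also have "\<dots> = - exp (2 * eta * (z + w')) * sig z"
    by (simp add: exp_add[symmetric] algebra_simps)
  finally show ?thesis .
qed

end

context rect begin

lemma cnj_w': "cnj w' = - w'" by (simp add: complex_eq_iff re0)

lemma eta_cnj: "cnj eta = - eta"
  unfolding eta_def by (simp add: zet_cnj[symmetric] cnj_w' zet_odd)

lemma real_S: "of_real x - w' \<in> S"
  using bpos by (simp add: S_def b_def)

lemma key:
  fixes x s :: real
  shows "cnj (sig (of_real x + of_real s + w') / sig (of_real x + w') * exp (- eta * of_real s))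
       = sig (of_real x + of_real s + w') / sig (of_real x + w') * exp (- eta * of_real s)"
proof -
  define A where "A = sig (of_real x + of_real s - w')"
  define B where "B = sig (of_real x - w')"
  have q1: "sig (of_real x + of_real s + w') = - exp (2 * eta * (of_real x + of_real s)) * A"
  proof -
    have "of_real (x + s) - w' \<in> S" by (rule real_S)
    from sig_quasi[OF this] show ?thesis
      unfolding A_def by (simp add: algebra_simps)
  qed
  have q2: "sig (of_real x + w') = - exp (2 * eta * of_real x) * B"
    using sig_quasi[OF real_S[of x]] unfolding B_def by (simp add: algebra_simps)
  have c1: "cnj (sig (of_real x + of_real s + w')) = A"
    unfolding A_def by (simp add: sig_cnj[symmetric] cnj_w')
  have c2: "cnj (sig (of_real x + w')) = B"
    unfolding B_def by (simp add: sig_cnj[symmetric] cnj_w')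
  have c3: "cnj (exp (- eta * of_real s)) = exp (eta * of_real s)"
    by (simp add: exp_cnj eta_cnj)
  have e1: "exp (2 * eta * (of_real x + of_real s)) = exp (2 * eta * of_real x) * (exp (eta * of_real s) * exp (eta * of_real s))"
    by (simp add: exp_add[symmetric] algebra_simps)
  have e2: "exp (- eta * of_real s) * exp (eta * of_real s) = 1"
    by (simp add: exp_add[symmetric])
  have Bnz: "B \<noteq> 0" using S_U[OF real_S[of x]] by (simp add: U_def B_def)
  have ex0: "exp (2 * eta * of_real x) \<noteq> 0" by simp
  have "cnj (sig (of_real x + of_real s + w') / sig (of_real x + w') * exp (- eta * of_real s))
        = A / B * exp (eta * of_real s)" by (simp only: complex_cnj_mult complex_cnj_divide c1 c2 c3)
  also have "\<dots> = (A * exp (eta * of_real s)) / B" by simp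
  also have "\<dots> = (exp (2 * eta * of_real x) * (exp (eta * of_real s) * exp (eta * of_real s)) * A) /
                    (exp (2 * eta * of_real x) * B) * exp (- eta * of_real s)"
    using Bnz ex0 e2 by (simp add: field_simps)
  also have "\<dots> = sig (of_real x + of_real s + w') / sig (of_real x + w') * exp (- eta * of_real s)"
    unfolding q1 q2 e1[symmetric] by simp
  finally show ?thesis .
qed

lemma psi_real:
  fixes x s :: real
  assumes "cnj q = q" "cnj t = t"
  shows "sig (of_real x + of_real s + w') / (sig (of_real x + w') * q) * exp (- t * of_real x - zet w' * of_real s) \<in> \<real>"
proof -
  define X where "X = sig (of_real x + of_real s + w') / sig (of_real x + w') * exp (- eta * of_real s)"
  have "sig (of_real x + of_real s + w') / (sig (of_real x + w') * q) * exp (- t * of_real x - zet w' * of_real s)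
        = X * (1 / q) * exp (- t * of_real x)"
    unfolding X_def eta_def by (simp add: exp_diff exp_minus field_simps)
  moreover have "cnj (X * (1 / q) * exp (- t * of_real x)) = X * (1 / q) * exp (- t * of_real x)"
    using key[of x s] assms unfolding X_def[symmetric] by (simp add: exp_cnj)
  ultimately show ?thesis by (simp add: Reals_cnj_iff)
qed

lemma sig_real: "cnj (sig (of_real x)) = sig (of_real x)"
  by (simp add: sig_cnj[symmetric])

lemma zet_real: "cnj (zet (of_real x)) = zet (of_real x)"
  by (simp add: zet_cnj[symmetric])

end

theorem proposition2p1:
  fixes g2 g3 w :: real and w' :: complex
  assumes disc: "g2 ^ 3 - 27 * g3 ^ 2 > 0"
    and w_pos: "w > 0"
    and w'_imag: "Re w' = 0" and w'_pos: "Im w' > 0"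
    and invariants: "\<forall>z. z \<notin> lattice (of_real w) w' \<longrightarrow>
        (deriv (wp (of_real w) w') z)\<^sup>2
          = 4 * (wp (of_real w) w' z) ^ 3 - of_real g2 * wp (of_real w) w' z - of_real g3"
  shows "(\<forall>x k :: real. complex_of_real k \<notin> lattice (of_real w) w' \<longrightarrow>
            Psi1 (of_real w) w' (of_real x) (of_real k) \<in> \<real>)
       \<and> (\<forall>x k l :: real. complex_of_real k \<notin> lattice (of_real w) w'
            \<longrightarrow> complex_of_real l \<notin> lattice (of_real w) w'
            \<longrightarrow> complex_of_real (k + l) \<notin> lattice (of_real w) w' \<longrightarrow>
            Psi2 (of_real w) w' (of_real x) (of_real k) (of_real l) \<in> \<real>)"
proof -
  interpret rect w w' using w_pos w'_imag w'_pos by unfold_locales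
  have sigeq: "wsigma (of_real w) w' = sig" by (simp add: sig_def)
  have zeteq: "wzeta (of_real w) w' = zet" by (rule zet_eq)
  have P1: "Psi1 (of_real w) w' (of_real x) (of_real k) \<in> \<real>" for x k :: real
    unfolding Psi1_def sigeq zeteq by (rule psi_real[OF sig_real zet_real])
  have P2: "Psi2 (of_real w) w' (of_real x) (of_real k) (of_real l) \<in> \<real>" for x k l :: real
  proof -
    have a: "of_real x + of_real k + of_real l + w' = of_real x + of_real (k + l) + w'"
      by (simp add: algebra_simps)
    have b: "complex_of_real k + of_real l = of_real (k + l)" by simp
    have c: "cnj (zet (of_real k) + zet (of_real l)) = zet (of_real k) + zet (of_real l)"
      by (simp add: zet_real)
    show ?thesis unfolding Psi2_def sigeq zeteq a b
      by (rule psi_real[OF sig_real c])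
  qed
  show ?thesis using P1 P2 by blast
qed

end
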